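(* Let $k\ge 2$ be an integer and let $b\in\mathbb{C}\setminus\mathbb{Z}$. Writing $d_j(b)=\delta_{1j}+\mathrm{Li}_{1-j}(e^{-2\pi i b})$, the Hurwitz zeta function satisfies $$\zeta(k,b)=\frac{1}{2b^k}+\frac{(2\pi i)^k d_k(b)}{4(k-1)!}+\frac{(2\pi i)^k e^{-2\pi i b}}{4}\sum_{j=1}^{k}\frac{d_j(b)}{(j-1)!\,(k-j)!}-\frac{i(2\pi i)^k}{2}\int_{0}^{1}\sum_{j=1}^{k}\frac{d_j(b)\left(u^{k-j}e^{-2\pi i b u}-e^{-2\pi i b}\right)}{(j-1)!\,(k-j)!}\cot(\pi u)\,du.$$
   Context: $\zeta(k,b)=\sum_{j=0}^{\infty}(j+b)^{-k}$ is the Hurwitz zeta function. $i$ is the imaginary unit, $\delta_{1j}$ the Kronecker delta, and $\mathrm{Li}_s(z)$ the polylogarithm (analytic continuation of $\sum_{m\ge1}z^m/m^s$; for $s\le0$ an integer it is a rational function of $z$ defined for $z\ne1$). *)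

theory Defs
  imports "HOL-Analysis.Analysis"
begin

definition hurwitz_zeta :: "nat \<Rightarrow> complex \<Rightarrow> complex" where
  "hurwitz_zeta k b = (\<Sum>j. 1 / (of_nat j + b) ^ k)"

text \<open>Polylogarithm of non-positive integer order, Li_{-n}(z), as the rational
  function obtained by analytic continuation: Li_0(z) = z/(1-z) and
  Li_{-(n+1)}(z) = z * d/dz Li_{-n}(z).\<close>
fun polylog_neg :: "nat \<Rightarrow> complex \<Rightarrow> complex" where
  "polylog_neg 0 z = z / (1 - z)"
| "polylog_neg (Suc n) z = z * deriv (polylog_neg n) z"

definition d_coef :: "nat \<Rightarrow> complex \<Rightarrow> complex" where
  "d_coef j b = (if j = 1 then 1 else 0) + polylog_neg (j - 1) (exp (- 2 * pi * \<i> * b))"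

end

theory Submission imports Defs "HOL-Complex_Analysis.Complex_Analysis" begin

fun T :: "nat \<Rightarrow> complex \<Rightarrow> complex" where
  "T 0 = (\<lambda>z. 1 / (1 - z))"
| "T (Suc n) = (\<lambda>z. z * deriv (T n) z)"

lemma open_ne1: "open (-{1::complex})" by auto

lemma T_holo: "T n holomorphic_on (-{1})"
proof (induction n)
  case 0
  show ?case by (auto intro!: holomorphic_intros)
next
  case (Suc n)
  have "deriv (T n) holomorphic_on (-{1})"
    using Suc open_ne1 by (rule holomorphic_deriv)
  then show ?case by (auto intro!: holomorphic_intros)
qed

lemma T_deriv: "z \<noteq> 1 \<Longrightarrow> (T n has_field_derivative deriv (T n) z) (at z)"
  using T_holo[of n] open_ne1
  by (meson ComplI holomorphic_derivI singletonD)

lemma binom_shift_sum: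
  fixes f :: "nat \<Rightarrow> complex"
  shows "(\<Sum>m\<le>Suc n. of_nat (Suc n choose m) * f m) =
         (\<Sum>m\<le>n. of_nat (n choose m) * f m) + (\<Sum>m\<le>n. of_nat (n choose m) * f (Suc m))"
proof -
  have "(\<Sum>m\<le>Suc n. of_nat (Suc n choose m) * f m) =
        f 0 + (\<Sum>m\<le>n. of_nat (Suc n choose Suc m) * f (Suc m))"
    by (subst sum.atMost_Suc_shift) simp
  also have "\<dots> = f 0 + (\<Sum>m\<le>n. of_nat (n choose Suc m) * f (Suc m))
                   + (\<Sum>m\<le>n. of_nat (n choose m) * f (Suc m))"
    by (simp add: sum.distrib algebra_simps)
  also have "f 0 + (\<Sum>m\<le>n. of_nat (n choose Suc m) * f (Suc m)) =
             (\<Sum>m\<le>Suc n. of_nat (n choose m) * f m)"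
    by (subst sum.atMost_Suc_shift) simp
  also have "\<dots> = (\<Sum>m\<le>n. of_nat (n choose m) * f m)"
    by simp
  finally show ?thesis .
qed

lemma T_rec:
  "z \<noteq> 1 \<Longrightarrow> T n z = z * (\<Sum>m\<le>n. of_nat (n choose m) * T m z) + (if n = 0 then 1 else 0)"
proof (induction n arbitrary: z)
  case 0
  then show ?case by (simp add: field_simps)
next
  case (Suc n)
  define R where "R = (\<lambda>z. z * (\<Sum>m\<le>n. of_nat (n choose m) * T m z) + (if n = 0 then 1 else 0))"
  have ev: "eventually (\<lambda>w. T n w = R w) (nhds z)"
  proof -
    have "eventually (\<lambda>w. w \<in> -{1}) (nhds z)"
      using Suc.prems open_ne1 by (intro eventually_nhds_in_open) auto
    then show ?thesis by eventually_elim (use Suc.IH R_def in auto)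
  qed
  have "deriv (T n) z = deriv R z" by (rule deriv_cong_ev[OF ev refl])
  also have "(R has_field_derivative
     ((\<Sum>m\<le>n. of_nat (n choose m) * T m z) + z * (\<Sum>m\<le>n. of_nat (n choose m) * deriv (T m) z))) (at z)"
    unfolding R_def using Suc.prems
    by (auto intro!: derivative_eq_intros T_deriv simp del: T.simps simp: algebra_simps)
  hence "deriv R z = (\<Sum>m\<le>n. of_nat (n choose m) * T m z) + z * (\<Sum>m\<le>n. of_nat (n choose m) * deriv (T m) z)"
    by (rule DERIV_imp_deriv)
  finally have "T (Suc n) z = z * ((\<Sum>m\<le>n. of_nat (n choose m) * T m z) + (\<Sum>m\<le>n. of_nat (n choose m) * T (Suc m) z))"
    by (simp add: algebra_simps sum_distrib_left)
  then show ?case by (simp only: binom_shift_sum nat.distinct(2) if_False add_0_right)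
qed

lemma polylog_T: "z \<noteq> 1 \<Longrightarrow> polylog_neg n z = T n z - (if n = 0 then 1 else 0)"
proof (induction n arbitrary: z)
  case 0
  then show ?case by (simp add: field_simps)
next
  case (Suc n)
  have ev: "eventually (\<lambda>w. polylog_neg n w = T n w - (if n = 0 then 1 else 0)) (nhds z)"
  proof -
    have "eventually (\<lambda>w. w \<in> -{1}) (nhds z)"
      using Suc.prems open_ne1 by (intro eventually_nhds_in_open) auto
    then show ?thesis by eventually_elim (use Suc.IH in auto)
  qed
  have "deriv (polylog_neg n) z = deriv (\<lambda>w. T n w - (if n = 0 then 1 else 0)) z"
    by (rule deriv_cong_ev[OF ev refl])
  also have "\<dots> = deriv (T n) z"
    using Suc.prems by (intro DERIV_imp_deriv) (auto intro!: derivative_eq_intros T_deriv simp del: T.simps)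
  finally show ?case by simp
qed

lemma d_coef_T:
  assumes "j \<ge> 1" "exp (- 2 * pi * \<i> * b) \<noteq> 1"
  shows "d_coef j b = T (j - 1) (exp (- 2 * pi * \<i> * b))"
  using assms by (simp add: d_coef_def polylog_T)


lemma exp_ne1:
  assumes "b \<notin> \<int>"
  shows "exp (- 2 * pi * \<i> * b) \<noteq> 1"
proof
  assume "exp (- 2 * pi * \<i> * b) = 1"
  then obtain n :: int where h: "Re (- 2 * pi * \<i> * b) = 0" "Im (- 2 * pi * \<i> * b) = of_int (2*n) * pi"
    by (auto simp: exp_eq_1)
  have "Im b = 0" using h(1) by simp
  moreover have "Re b = of_int (-n)"
  proof -
    have "pi * (Re b + of_int n) = 0" using h(2) by (simp add: algebra_simps)
    with pi_gt_zero show ?thesis by simp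
  qed
  ultimately have "b = of_int (-n)" by (simp add: complex_eq_iff)
  then show False using assms by (metis Ints_of_int)
qed

definition P :: "complex \<Rightarrow> nat \<Rightarrow> complex \<Rightarrow> complex" where
  "P b m s = (\<Sum>j=1..m. d_coef j b * s ^ (m - j) / (fact (j - 1) * fact (m - j)))"

lemma P_zero: "m \<ge> 1 \<Longrightarrow> P b m 0 = d_coef m b / fact (m - 1)"
proof -
  assume m: "m \<ge> 1"
  have "P b m 0 = (\<Sum>j\<in>{m}. d_coef j b * 0 ^ (m - j) / (fact (j - 1) * fact (m - j)))"
    unfolding P_def using m by (intro sum.mono_neutral_right) auto
  then show ?thesis by simp
qed

lemma P_one: "P b m 1 = (\<Sum>j=1..m. d_coef j b / (fact (j - 1) * fact (m - j)))"
  by (simp add: P_def)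

lemma P_vanish:
  assumes "m \<ge> 2" "b \<notin> \<int>"
  shows "P b m 0 = exp (- 2 * pi * \<i> * b) * P b m 1"
proof -
  define z where "z = exp (- 2 * pi * \<i> * b)"
  have z1: "z \<noteq> 1" using exp_ne1[OF assms(2)] by (simp add: z_def)
  obtain n where n: "m = Suc n" "n \<ge> 1" using assms(1) by (cases m) auto
  have "P b m 1 = (\<Sum>j=Suc 0..Suc n. d_coef j b / (fact (j - 1) * fact (Suc n - j)))"
    by (simp add: P_one n)
  also have "\<dots> = (\<Sum>i=0..n. d_coef (Suc i) b / (fact i * fact (n - i)))"
    by (subst sum.shift_bounds_cl_Suc_ivl) simp
  also have "\<dots> = (\<Sum>i\<le>n. of_nat (n choose i) * T i z / fact n)"
  proof (rule sum.cong)
    fix i assume i: "i \<in> {..n}"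
    have "d_coef (Suc i) b = T i z" using d_coef_T[of "Suc i" b] z1 by (simp add: z_def)
    moreover have "of_nat (n choose i) = (fact n / (fact i * fact (n - i)) :: complex)"
      using i by (simp add: binomial_fact)
    ultimately show "d_coef (Suc i) b / (fact i * fact (n - i)) = of_nat (n choose i) * T i z / fact n"
      by (simp add: field_simps)
  qed (auto simp: atMost_atLeast0)
  finally have "z * P b m 1 = (z * (\<Sum>i\<le>n. of_nat (n choose i) * T i z)) / fact n"
    by (simp add: sum_divide_distrib[symmetric])
  also have "z * (\<Sum>i\<le>n. of_nat (n choose i) * T i z) = T n z"
    using T_rec[OF z1, of n] n by simp
  also have "T n z = d_coef m b" using d_coef_T[of m b] z1 n by (simp add: z_def)
  finally show ?thesis using P_zero[of m b] n by (simp add: z_def)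
qed

lemma P_Suc_split:
  "P b (Suc m) s = (\<Sum>j=1..m. d_coef j b * (s ^ Suc (m - j) / fact (Suc (m - j))) / fact (j - 1))
     + d_coef (Suc m) b / fact m"
proof -
  have "P b (Suc m) s = (\<Sum>j=1..m. d_coef j b * s ^ (Suc m - j) / (fact (j - 1) * fact (Suc m - j)))
     + d_coef (Suc m) b / fact m"
    unfolding P_def by (subst sum.cl_ivl_Suc) simp
  also have "(\<Sum>j=1..m. d_coef j b * s ^ (Suc m - j) / (fact (j - 1) * fact (Suc m - j))) =
             (\<Sum>j=1..m. d_coef j b * (s ^ Suc (m - j) / fact (Suc (m - j))) / fact (j - 1))"
    by (intro sum.cong refl) (simp add: Suc_diff_le)
  finally show ?thesis .
qed

lemma pow_fact_deriv:
  "((\<lambda>s. s ^ Suc r / fact (Suc r) :: complex) has_field_derivative s ^ r / fact r) (at s)"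
proof -
  have "((\<lambda>s. s ^ Suc r / fact (Suc r) :: complex) has_field_derivative
          (of_nat (Suc r) * s ^ r) / fact (Suc r)) (at s)"
  proof -
    have d: "((\<lambda>s. s ^ Suc r) has_field_derivative of_nat (Suc r) * (1 * s ^ (Suc r - Suc 0))) (at s)"
      by (rule DERIV_power[OF DERIV_ident])
    from DERIV_cdivide[OF d, of "fact (Suc r)"] show ?thesis by simp
  qed
  moreover have "(of_nat (Suc r) * s ^ r) / fact (Suc r) = s ^ r / (fact r :: complex)"
    by (simp add: fact_Suc field_simps del: of_nat_Suc)
  ultimately show ?thesis by (simp only:)
qed

lemma P_deriv: "(P b (Suc m) has_field_derivative P b m s) (at s)"
proof -
  have "((\<lambda>s. (\<Sum>j=1..m. d_coef j b * (s ^ Suc (m - j) / fact (Suc (m - j))) / fact (j - 1))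
     + d_coef (Suc m) b / fact m) has_field_derivative
       (\<Sum>j=1..m. d_coef j b * (s ^ (m - j) / fact (m - j)) / fact (j - 1))) (at s)"
  proof -
    have "\<And>j. ((\<lambda>s. s ^ Suc (m - j) / fact (Suc (m - j)) :: complex) has_field_derivative
                 s ^ (m - j) / fact (m - j)) (at s)"
      by (rule pow_fact_deriv)
    then have "((\<lambda>s. (\<Sum>j=1..m. d_coef j b * (s ^ Suc (m - j) / fact (Suc (m - j))) / fact (j - 1)))
       has_field_derivative
       (\<Sum>j=1..m. d_coef j b * (s ^ (m - j) / fact (m - j)) / fact (j - 1))) (at s)"
      by (intro DERIV_sum ballI DERIV_cdivide DERIV_cmult)
    from DERIV_add[OF this DERIV_const] show ?thesis by simp
  qed
  moreover have "(\<lambda>s. (\<Sum>j=1..m. d_coef j b * (s ^ Suc (m - j) / fact (Suc (m - j))) / fact (j - 1))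
     + d_coef (Suc m) b / fact m) = P b (Suc m)"
    by (rule ext) (simp add: P_Suc_split)
  moreover have "(\<Sum>j=1..m. d_coef j b * (s ^ (m - j) / fact (m - j)) / fact (j - 1)) = P b m s"
    unfolding P_def by (intro sum.cong refl) (simp add: field_simps)
  ultimately show ?thesis by simp
qed


lemma ftc01:
  assumes "\<And>s. s \<in> S \<Longrightarrow> (f has_field_derivative f' s) (at s)"
    and "\<And>u. u \<in> {0..1} \<Longrightarrow> complex_of_real u \<in> S"
  shows "((\<lambda>u. f' (of_real u)) has_integral (f 1 - f 0)) {0..1::real}"
proof -
  have "((\<lambda>u. f (of_real u)) has_vector_derivative f' (of_real u)) (at u within {0..1})"
    if "u \<in> {0..1}" for u
    using assms that by (intro has_vector_derivative_real_field) auto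
  from fundamental_theorem_of_calculus[OF _ this] show ?thesis by simp
qed

lemma int_exp:
  fixes a :: complex
  assumes "a \<noteq> 0"
  shows "((\<lambda>u. exp (- a * of_real u)) has_integral (1 - exp (- a)) / a) {0..1}"
proof -
  have "((\<lambda>u. exp (- a * of_real u)) has_integral ((\<lambda>s. - exp (- a * s) / a) 1 - (\<lambda>s. - exp (- a * s) / a) 0)) {0..1}"
    using assms by (intro ftc01[where S=UNIV and f'="\<lambda>s::complex. exp (- a * s)"]) (auto intro!: derivative_eq_intros simp: field_simps)
  then show ?thesis by (simp add: diff_divide_distrib)
qed

lemma P_one_val: "P b 1 s = d_coef 1 b"
  by (simp add: P_def)

lemma J_int:
  assumes "a \<noteq> 0" "exp (- a) = exp (- 2 * pi * \<i> * b)" "b \<notin> \<int>" "m \<ge> 1"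
  shows "((\<lambda>u. P b m (of_real u) * exp (- a * of_real u)) has_integral 1 / a ^ m) {0..1}"
  using assms(4)
proof (induction m rule: nat_induct_at_least)
  case base
  define z where "z = exp (- 2 * pi * \<i> * b)"
  have z1: "z \<noteq> 1" using exp_ne1[OF assms(3)] by (simp add: z_def)
  have d1: "d_coef 1 b = 1 / (1 - z)" using d_coef_T[of 1 b] z1 by (simp add: z_def)
  have i: "((\<lambda>u. d_coef 1 b * exp (- a * of_real u)) has_integral d_coef 1 b * ((1 - exp (- a)) / a)) {0..1}"
    by (intro has_integral_mult_right int_exp assms)
  have e: "d_coef 1 b * ((1 - exp (- a)) / a) = 1 / a ^ 1"
    using assms(2) z1 d1 by (simp add: z_def field_simps)
  have "((\<lambda>u. d_coef 1 b * exp (- a * of_real u)) has_integral 1 / a ^ 1) {0..1}"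
    using i unfolding e .
  moreover have "(\<lambda>u. P b 1 (of_real u) * exp (- a * of_real u)) = (\<lambda>u. d_coef 1 b * exp (- a * of_real u))"
    by (simp only: P_one_val)
  ultimately show ?case by simp
next
  case (Suc m)
  define z where "z = exp (- 2 * pi * \<i> * b)"
  define F where "F = (\<lambda>s. - P b (Suc m) s * exp (- a * s) / a)"
  have "((\<lambda>u. P b (Suc m) (of_real u) * exp (- a * of_real u) - P b m (of_real u) * exp (- a * of_real u) / a)
          has_integral (F 1 - F 0)) {0..1}"
    unfolding F_def using assms(1)
    by (intro ftc01[where S=UNIV and f'="\<lambda>s::complex. P b (Suc m) s * exp (- a * s) - P b m s * exp (- a * s) / a"])
       (auto intro!: derivative_eq_intros P_deriv simp: field_simps)
  moreover have "F 1 - F 0 = 0"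
    using P_vanish[of "Suc m" b] Suc.hyps assms(2,3) by (simp add: F_def field_simps)
  moreover have "((\<lambda>u. P b m (of_real u) * exp (- a * of_real u) / a) has_integral (1 / a ^ m) / a) {0..1}"
    by (intro has_integral_divide Suc.IH)
  ultimately have "((\<lambda>u. (P b (Suc m) (of_real u) * exp (- a * of_real u) - P b m (of_real u) * exp (- a * of_real u) / a)
       + P b m (of_real u) * exp (- a * of_real u) / a) has_integral (0 + (1 / a ^ m) / a)) {0..1}"
    by (intro has_integral_add) auto
  then show ?case by (simp add: mult.commute)
qed


lemma exp_int: "exp (- 2 * pi * \<i> * of_nat n) = 1"
proof -
  have "exp (- 2 * pi * \<i> * of_nat n) = exp (2 * pi * \<i>) powi (- int n)"
    by (simp add: exp_of_nat_mult[symmetric] power_int_minus exp_minus mult_ac)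
  then show ?thesis by simp
qed

definition g :: "complex \<Rightarrow> nat \<Rightarrow> complex \<Rightarrow> complex" where
  "g b k s = P b k s * exp (- 2 * pi * \<i> * b * s) - exp (- 2 * pi * \<i> * b) * P b k 1"

lemma G_int:
  assumes "k \<ge> 2" "b \<notin> \<int>"
  shows "((\<lambda>u. g b k (of_real u) * exp (- 2 * pi * \<i> * of_nat n * of_real u)) has_integral
          (1 / (2 * pi * \<i> * (b + of_nat n)) ^ k - (if n = 0 then exp (- 2 * pi * \<i> * b) * P b k 1 else 0))) {0..1}"
proof -
  define a where "a = 2 * pi * \<i> * (b + of_nat n)"
  have bn: "b + of_nat n \<noteq> 0"
  proof
    assume "b + of_nat n = 0"
    then have "b = - of_nat n" by (simp add: eq_neg_iff_add_eq_0)
    then show False using assms(2) by (metis Ints_minus Ints_of_nat)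
  qed
  have a0: "a \<noteq> 0" using bn by (simp add: a_def)
  have ea: "exp (- a) = exp (- 2 * pi * \<i> * b)"
  proof -
    have "- a = (- 2 * pi * \<i> * b) + (- 2 * pi * \<i> * of_nat n)"
      by (simp add: a_def algebra_simps)
    then have "exp (- a) = exp (- 2 * pi * \<i> * b) * exp (- 2 * pi * \<i> * of_nat n)"
      by (simp only: exp_add)
    then show ?thesis by (simp only: exp_int mult_1_right)
  qed
  have J: "((\<lambda>u. P b k (of_real u) * exp (- a * of_real u)) has_integral 1 / a ^ k) {0..1}"
    using J_int[OF a0 ea assms(2)] assms(1) by simp
  have E: "((\<lambda>u. exp (- 2 * pi * \<i> * of_nat n * of_real u)) has_integral (if n = 0 then 1 else 0)) {0..1}"
  proof (cases "n = 0")
    case True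
    then show ?thesis using has_integral_const_real[of "1::complex" 0 1] by simp
  next
    case False
    have "((\<lambda>u. exp (- (2 * pi * \<i> * of_nat n) * of_real u)) has_integral
            (1 - exp (- (2 * pi * \<i> * of_nat n))) / (2 * pi * \<i> * of_nat n)) {0..1}"
      using False by (intro int_exp) simp
    moreover have "exp (- (2 * pi * \<i> * of_nat n)) = 1" using exp_int[of n] by simp
    ultimately show ?thesis using False by simp
  qed
  have int: "((\<lambda>u. P b k (of_real u) * exp (- a * of_real u) -
         exp (- 2 * pi * \<i> * b) * P b k 1 * exp (- 2 * pi * \<i> * of_nat n * of_real u)) has_integral
         (1 / a ^ k - exp (- 2 * pi * \<i> * b) * P b k 1 * (if n = 0 then 1 else 0))) {0..1}"
    by (intro has_integral_diff J has_integral_mult_right E)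
  have pt: "\<And>u. g b k (of_real u) * exp (- 2 * pi * \<i> * of_nat n * of_real u) =
     P b k (of_real u) * exp (- a * of_real u) -
         exp (- 2 * pi * \<i> * b) * P b k 1 * exp (- 2 * pi * \<i> * of_nat n * of_real u)"
  proof -
    fix u
    have "- a * of_real u = (- 2 * pi * \<i> * b * of_real u) + (- 2 * pi * \<i> * of_nat n * of_real u)"
      by (simp add: a_def algebra_simps)
    then have "exp (- a * of_real u) = exp (- 2 * pi * \<i> * b * of_real u) * exp (- 2 * pi * \<i> * of_nat n * of_real u)"
      by (simp only: exp_add)
    then show "g b k (of_real u) * exp (- 2 * pi * \<i> * of_nat n * of_real u) =
     P b k (of_real u) * exp (- a * of_real u) -
         exp (- 2 * pi * \<i> * b) * P b k 1 * exp (- 2 * pi * \<i> * of_nat n * of_real u)"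
      by (simp add: g_def algebra_simps)
  qed
  have val: "1 / a ^ k - exp (- 2 * pi * \<i> * b) * P b k 1 * (if n = 0 then 1 else 0) =
     1 / (2 * pi * \<i> * (b + of_nat n)) ^ k - (if n = 0 then exp (- 2 * pi * \<i> * b) * P b k 1 else 0)"
    by (simp add: a_def)
  show ?thesis using int unfolding pt[symmetric] val .
qed


lemma factor01:
  fixes f :: "complex \<Rightarrow> complex"
  assumes holf: "f holomorphic_on UNIV" and f0: "f 0 = 0" and f1: "f 1 = 0"
  obtains f2 where "f2 holomorphic_on UNIV" "\<And>s. f s = s * (s - 1) * f2 s"
    "f2 0 = - deriv f 0" "f2 1 = deriv f 1"
proof -
  define h1 where "h1 = (\<lambda>s. if s = 0 then deriv f 0 else (f s - f 0) / (s - 0))"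
  have hol1: "h1 holomorphic_on UNIV" unfolding h1_def by (rule pole_lemma_open[OF holf]) simp
  have e1: "f s = s * h1 s" for s using f0 by (simp add: h1_def)
  have h11: "h1 1 = 0" using f0 f1 by (simp add: h1_def)
  define h2 where "h2 = (\<lambda>s. if s = 1 then deriv h1 1 else (h1 s - h1 1) / (s - 1))"
  have hol2: "h2 holomorphic_on UNIV" unfolding h2_def by (rule pole_lemma_open[OF hol1]) simp
  have e2: "h1 s = (s - 1) * h2 s" for s using h11 by (simp add: h2_def)
  have fe: "f = (\<lambda>s. s * (s - 1) * h2 s)" using e1 e2 by (auto simp: mult.assoc)
  have d2: "(h2 has_field_derivative deriv h2 s) (at s)" for s
    using hol2 by (intro holomorphic_derivI[of _ UNIV]) auto
  have "deriv f 0 = - h2 0"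
    unfolding fe by (rule DERIV_imp_deriv) (auto intro!: derivative_eq_intros d2)
  moreover have "deriv f 1 = h2 1"
    unfolding fe by (rule DERIV_imp_deriv) (auto intro!: derivative_eq_intros d2)
  ultimately show ?thesis using that[OF hol2] fe by auto
qed

lemma exp_eq1_real:
  assumes "0 < u" "u < 1"
  shows "exp (- 2 * pi * \<i> * complex_of_real u) \<noteq> 1"
proof
  assume "exp (- 2 * pi * \<i> * complex_of_real u) = 1"
  then obtain n :: int where h: "Im (- 2 * pi * \<i> * complex_of_real u) = of_int (2*n) * pi"
    by (auto simp: exp_eq_1)
  have "pi * (u + of_int n) = 0" using h by (simp add: algebra_simps)
  then have "u = - of_int n" using pi_gt_zero by simp
  then show False using assms by (cases "n \<ge> 0") auto
qed


lemma cot_exp: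
  assumes "0 < u" "u < 1"
  shows "complex_of_real (cot (pi * u)) =
     \<i> * (1 + exp (- 2 * pi * \<i> * complex_of_real u)) / (1 - exp (- 2 * pi * \<i> * complex_of_real u))"
proof -
  define x where "x = complex_of_real (pi * u)"
  define A where "A = exp (\<i> * x)"
  define B where "B = exp (- (\<i> * x))"
  have AB: "A * B = 1" by (simp add: A_def B_def exp_add[symmetric])
  have w: "exp (- 2 * pi * \<i> * complex_of_real u) = B ^ 2"
    by (simp add: B_def x_def exp_of_nat_mult[symmetric] algebra_simps)
  have nz: "1 - B ^ 2 \<noteq> 0" using exp_eq1_real[OF assms] w by simp
  have AmB: "A - B \<noteq> 0"
  proof
    assume "A - B = 0"
    then have "(A - B) * B = 0" by simp
    then have "1 - B ^ 2 = 0" using AB by (simp add: algebra_simps power2_eq_square)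
    with nz show False by simp
  qed
  have "cos x = complex_of_real (cos (pi * u))" by (simp only: x_def cos_of_real)
  moreover have "sin x = complex_of_real (sin (pi * u))" by (simp only: x_def sin_of_real)
  ultimately have "complex_of_real (cot (pi * u)) = cos x / sin x"
    by (simp add: cot_def)
  also have "\<dots> = ((A + B) / 2) / ((A - B) / (2 * \<i>))"
    by (simp add: cos_exp_eq sin_exp_eq A_def B_def)
  also have "\<dots> = \<i> * (A + B) / (A - B)"
    using AmB by (simp add: field_simps)
  also have "\<dots> = \<i> * ((A + B) * B) / ((A - B) * B)"
    using AmB by (simp add: B_def field_simps)
  also have "\<dots> = \<i> * (1 + B ^ 2) / (1 - B ^ 2)"
    using AB by (simp add: algebra_simps power2_eq_square)
  finally show ?thesis unfolding w .
qed

lemma H_exists: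
  assumes "k \<ge> 2" "b \<notin> \<int>"
  obtains H S where "open S" "H holomorphic_on S" "\<And>u. u \<in> {0..1} \<Longrightarrow> complex_of_real u \<in> S"
    "\<And>s. s \<in> S \<Longrightarrow> g b k s = H s * (1 - exp (- 2 * pi * \<i> * s))"
proof -
  define E where "E = (\<lambda>s::complex. 1 - exp (- 2 * pi * \<i> * s))"
  have holg: "g b k holomorphic_on UNIV"
    unfolding g_def[abs_def] P_def by (auto intro!: holomorphic_intros)
  have g0: "g b k 0 = 0" using P_vanish[OF assms] by (simp add: g_def)
  have g1: "g b k 1 = 0" by (simp add: g_def)
  have holE: "E holomorphic_on UNIV" unfolding E_def by (auto intro!: holomorphic_intros)
  have E0: "E 0 = 0" by (simp add: E_def)
  have E1: "E 1 = 0" using exp_int[of 1] by (simp add: E_def)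
  have dE: "deriv E s = 2 * pi * \<i> * exp (- 2 * pi * \<i> * s)" for s
    unfolding E_def by (rule DERIV_imp_deriv) (auto intro!: derivative_eq_intros)
  obtain g2 where hg2: "g2 holomorphic_on UNIV" "\<And>s. g b k s = s * (s - 1) * g2 s"
    using factor01[OF holg g0 g1] by blast
  obtain E2 where hE2: "E2 holomorphic_on UNIV" "\<And>s. E s = s * (s - 1) * E2 s"
    "E2 0 = - deriv E 0" "E2 1 = deriv E 1"
    using factor01[OF holE E0 E1] by blast
  define S where "S = {s. E2 s \<noteq> 0}"
  have "open S" unfolding S_def
    by (rule open_Collect_neq) (auto intro: holomorphic_on_imp_continuous_on hE2(1))
  have holH: "(\<lambda>s. g2 s / E2 s) holomorphic_on S"
    unfolding S_def by (intro holomorphic_intros holomorphic_on_subset[OF hg2(1)] holomorphic_on_subset[OF hE2(1)]) auto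
  have inS: "complex_of_real u \<in> S" if "u \<in> {0..1}" for u
  proof (cases "u = 0 \<or> u = 1")
    case True
    then show ?thesis using hE2(3,4) dE exp_int[of 1] by (auto simp: S_def)
  next
    case False
    with that have "0 < u" "u < 1" by auto
    then have "E (of_real u) \<noteq> 0" using exp_eq1_real by (simp add: E_def)
    then show ?thesis using hE2(2) by (auto simp: S_def)
  qed
  have "g b k s = g2 s / E2 s * (1 - exp (- 2 * pi * \<i> * s))" if "s \<in> S" for s
  proof -
    have e: "1 - exp (- 2 * pi * \<i> * s) = s * (s - 1) * E2 s" using hE2(2)[of s] by (simp add: E_def)
    have "E2 s \<noteq> 0" using that by (simp add: S_def)
    then show ?thesis unfolding e hg2(2)[of s] by simp
  qed
  then show ?thesis using that[OF \<open>open S\<close> holH inS] by blast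
qed


lemma RL:
  assumes hol: "H holomorphic_on S" and S: "open S" and inS: "\<And>u. u \<in> {0..1} \<Longrightarrow> complex_of_real u \<in> S"
  shows "(\<lambda>M. integral {0..1} (\<lambda>u. H (of_real u) * exp (- 2 * pi * \<i> * of_nat M * of_real u))) \<longlonglongrightarrow> 0"
proof -
  have hol': "deriv H holomorphic_on S" using hol S by (rule holomorphic_deriv)
  have sub: "complex_of_real ` {0..1} \<subseteq> S" using inS by auto
  have cont': "continuous_on {0..1} (\<lambda>u. deriv H (complex_of_real u))"
    by (rule continuous_on_compose2[OF holomorphic_on_imp_continuous_on[OF hol'] _ sub])
       (intro continuous_intros)
  have "bounded ((\<lambda>u. deriv H (complex_of_real u)) ` {0..1})"
    by (intro compact_imp_bounded compact_continuous_image cont') auto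
  then obtain B0 where B0: "\<forall>u\<in>{0..1}. norm (deriv H (complex_of_real u)) \<le> B0"
    by (auto simp: bounded_iff)
  define B where "B = max B0 0"
  have B: "\<And>u. u \<in> {0..1} \<Longrightarrow> norm (deriv H (complex_of_real u)) \<le> B" "B \<ge> 0"
    using B0 by (auto simp: B_def intro: max.coboundedI1)
  define K where "K = (norm (H 1) + norm (H 0) + B) / (2 * pi)"
  have bound: "norm (integral {0..1} (\<lambda>u. H (of_real u) * exp (- 2 * pi * \<i> * of_nat M * of_real u)))
                 \<le> K * inverse (real M)" if M: "M \<ge> 1" for M
  proof -
    define a where "a = 2 * pi * \<i> * of_nat M"
    have a0: "a \<noteq> 0" using M by (simp add: a_def)
    have na: "norm a = 2 * pi * real M" by (simp add: a_def norm_mult)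
    define e where "e = (\<lambda>u::real. exp (- 2 * pi * \<i> * of_nat M * of_real u))"
    have e_alt: "e u = exp (- a * of_real u)" for u by (simp add: e_def a_def)
    have ne: "norm (e u) = 1" for u by (simp add: e_def norm_exp_eq_Re)
    define F where "F = (\<lambda>s. - H s * exp (- a * s) / a)"
    have dH: "\<And>s. s \<in> S \<Longrightarrow> (H has_field_derivative deriv H s) (at s)"
      using hol S by (intro holomorphic_derivI) auto
    have "((\<lambda>u. H (of_real u) * exp (- a * of_real u) - deriv H (of_real u) * exp (- a * of_real u) / a)
            has_integral (F 1 - F 0)) {0..1}"
      unfolding F_def using a0 inS
      by (intro ftc01[where S=S and f'="\<lambda>s::complex. H s * exp (- a * s) - deriv H s * exp (- a * s) / a"])
         (auto intro!: derivative_eq_intros dH simp: field_simps)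
    then have i1: "((\<lambda>u. H (of_real u) * e u - deriv H (of_real u) * e u / a) has_integral (F 1 - F 0)) {0..1}"
      by (simp add: e_alt)
    have ce: "continuous_on {0..1} e" unfolding e_def by (intro continuous_intros)
    have int2: "(\<lambda>u. deriv H (of_real u) * e u) integrable_on {0..1}"
      by (intro integrable_continuous_interval continuous_intros cont' ce)
    define I2 where "I2 = integral {0..1} (\<lambda>u. deriv H (of_real u) * e u)"
    have i2: "((\<lambda>u. deriv H (of_real u) * e u / a) has_integral I2 / a) {0..1}"
      unfolding I2_def by (intro has_integral_divide integrable_integral int2)
    have nI2: "norm I2 \<le> B"
    proof -
      have "norm I2 \<le> B * Henstock_Kurzweil_Integration.content (cbox 0 (1::real))"
        unfolding I2_def
        by (rule has_integral_bound[OF B(2)]) (use int2 B(1) ne in \<open>auto simp: norm_mult\<close>)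
      then show ?thesis by simp
    qed
    from has_integral_add[OF i1 i2]
    have "((\<lambda>u. H (of_real u) * e u) has_integral (F 1 - F 0 + I2 / a)) {0..1}" by simp
    then have "integral {0..1} (\<lambda>u. H (of_real u) * e u) = F 1 - F 0 + I2 / a"
      by (rule integral_unique)
    moreover have "F 1 - F 0 = - (H 1 - H 0) / a"
      using exp_int[of M] M by (simp add: F_def a_def field_simps)
    ultimately have eq: "integral {0..1} (\<lambda>u. H (of_real u) * e u) = (I2 - (H 1 - H 0)) / a"
      by (simp add: diff_divide_distrib add_divide_distrib)
    have "norm (I2 - (H 1 - H 0)) \<le> norm (H 1) + norm (H 0) + B"
      using nI2 norm_triangle_ineq4[of I2 "H 1 - H 0"] norm_triangle_ineq4[of "H 1" "H 0"] by linarith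
    then have "norm ((I2 - (H 1 - H 0)) / a) \<le> (norm (H 1) + norm (H 0) + B) / (2 * pi * real M)"
      by (simp add: norm_divide na divide_right_mono)
    also have "\<dots> = K * inverse (real M)" by (simp add: K_def field_simps)
    finally show ?thesis using eq by (simp add: e_def)
  qed
  show ?thesis
  proof (rule Lim_null_comparison)
    show "\<forall>\<^sub>F M in sequentially. norm (integral {0..1} (\<lambda>u. H (of_real u) * exp (- 2 * pi * \<i> * of_nat M * of_real u)))
                 \<le> K * inverse (real M)"
      using eventually_ge_at_top[of 1] by eventually_elim (rule bound)
    show "(\<lambda>M. K * inverse (real M)) \<longlonglongrightarrow> 0"
      using tendsto_mult_right_zero[OF lim_inverse_n, of K] by simp
  qed
qed


lemma poly_id:
  fixes h w :: complex
  shows "h * (1 + w) = h * (1 - w) + 2 * (\<Sum>n=1..N. h * (1 - w) * w ^ n) + 2 * (h * w ^ Suc N)"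
proof (induction N)
  case 0
  then show ?case by (simp add: algebra_simps)
next
  case (Suc N)
  then show ?case by (simp add: algebra_simps)
qed

lemma wpow: "exp (- 2 * pi * \<i> * complex_of_real u) ^ n = exp (- 2 * pi * \<i> * of_nat n * of_real u)"
  by (simp add: exp_of_nat_mult[symmetric] algebra_simps)

lemma sum_g:
  "(\<Sum>j=1..k. d_coef j b * (of_real u ^ (k - j) * exp (- 2 * pi * \<i> * b * of_real u) - exp (- 2 * pi * \<i> * b))
       / (fact (j - 1) * fact (k - j))) = g b k (of_real u)"
proof -
  have "(\<Sum>j=1..k. d_coef j b * (of_real u ^ (k - j) * exp (- 2 * pi * \<i> * b * of_real u) - exp (- 2 * pi * \<i> * b))
       / (fact (j - 1) * fact (k - j))) =
     (\<Sum>j=1..k. d_coef j b * of_real u ^ (k - j) / (fact (j - 1) * fact (k - j)) * exp (- 2 * pi * \<i> * b * of_real u)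
        - exp (- 2 * pi * \<i> * b) * (d_coef j b / (fact (j - 1) * fact (k - j))))"
    by (intro sum.cong refl) (simp add: field_simps)
  also have "\<dots> = g b k (of_real u)"
    by (simp add: g_def P_def P_one sum_subtractf sum_distrib_left sum_distrib_right)
  finally show ?thesis .
qed




lemma main_int:
  fixes k :: nat and b :: complex
  assumes k: "k \<ge> 2" and b: "b \<notin> \<int>"
  defines "fi \<equiv> (\<lambda>u. (\<Sum>j=1..k. d_coef j b *
              (of_real u ^ (k - j) * exp (- 2 * pi * \<i> * b * of_real u) - exp (- 2 * pi * \<i> * b))
              / (fact (j - 1) * fact (k - j))) * of_real (cot (pi * u)))"
  shows "(fi has_integral
     (\<i> * (1 / (2 * pi * \<i> * b) ^ k - exp (- 2 * pi * \<i> * b) * P b k 1)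
      + 2 * \<i> * (1 / (2 * pi * \<i>) ^ k) * (hurwitz_zeta k b - 1 / b ^ k))) {0..1}"
proof -
  obtain S H where S: "open S" and hol: "H holomorphic_on S" and inS: "\<And>u. u \<in> {0..1} \<Longrightarrow> complex_of_real u \<in> S"
    and gH: "\<And>s. s \<in> S \<Longrightarrow> g b k s = H s * (1 - exp (- 2 * pi * \<i> * s))"
    using H_exists[OF k b] by metis
  define e where "e = (\<lambda>n u. exp (- 2 * pi * \<i> * of_nat n * complex_of_real u))"
  define R where "R = (\<lambda>M. integral {0..1} (\<lambda>u. H (of_real u) * e M u))"
  define Gv where "Gv = (\<lambda>n. 1 / (2 * pi * \<i> * (b + of_nat n)) ^ k - (if n = 0 then exp (- 2 * pi * \<i> * b) * P b k 1 else 0))"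
  define Qv where "Qv = (\<lambda>N. \<i> * Gv 0 + 2 * \<i> * (\<Sum>n=1..N. Gv n) + 2 * \<i> * R (Suc N))"
  have sub: "complex_of_real ` {0..1} \<subseteq> S" using inS by auto
  have contH: "continuous_on {0..1} (\<lambda>u. H (complex_of_real u))"
    by (rule continuous_on_compose2[OF holomorphic_on_imp_continuous_on[OF hol] _ sub])
       (intro continuous_intros)
  have intQ: "(fi has_integral Qv N) {0..1}" for N
  proof -
    have A1: "((\<lambda>u. g b k (of_real u)) has_integral Gv 0) {0..1}"
      using G_int[OF k b, of 0] by (simp add: Gv_def)
    have A2: "((\<lambda>u. \<Sum>n=1..N. g b k (of_real u) * e n u) has_integral (\<Sum>n=1..N. Gv n)) {0..1}"
    proof (rule has_integral_sum)
      fix n assume n: "n \<in> {1..N}"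
      then have "n \<noteq> 0" by simp
      then show "((\<lambda>u. g b k (of_real u) * e n u) has_integral Gv n) {0..1}"
        using G_int[OF k b, of n] by (simp add: Gv_def e_def)
    qed simp
    have A3: "((\<lambda>u. H (of_real u) * e (Suc N) u) has_integral R (Suc N)) {0..1}"
    proof -
      have ce: "continuous_on {0..1} (\<lambda>u::real. exp (- 2 * pi * \<i> * of_nat (Suc N) * complex_of_real u))"
        by (intro continuous_intros)
      have "(\<lambda>u. H (of_real u) * e (Suc N) u) integrable_on {0..1}"
        unfolding e_def by (rule integrable_continuous_interval[OF continuous_on_mult[OF contH ce]])
      then show ?thesis unfolding R_def by (rule integrable_integral)
    qed
    have all: "((\<lambda>u. \<i> * g b k (of_real u) + 2 * \<i> * (\<Sum>n=1..N. g b k (of_real u) * e n u)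
                 + 2 * \<i> * (H (of_real u) * e (Suc N) u)) has_integral Qv N) {0..1}"
      unfolding Qv_def
      by (rule has_integral_add[OF has_integral_add[OF has_integral_mult_right[OF A1] has_integral_mult_right[OF A2]] has_integral_mult_right[OF A3]])
    have pt: "fi u = \<i> * g b k (of_real u) + 2 * \<i> * (\<Sum>n=1..N. g b k (of_real u) * e n u)
                 + 2 * \<i> * (H (of_real u) * e (Suc N) u)" if u: "u \<in> {0..1} - {0, 1}" for u
    proof -
      define w where "w = exp (- 2 * pi * \<i> * complex_of_real u)"
      have u01: "0 < u" "u < 1" using u by auto
      have w1: "1 - w \<noteq> 0" using exp_eq1_real[OF u01] by (simp add: w_def)
      have gu: "g b k (of_real u) = H (of_real u) * (1 - w)"
        using gH[of "of_real u"] inS u by (simp add: w_def)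
      have "fi u = g b k (of_real u) * (\<i> * (1 + w) / (1 - w))"
        unfolding fi_def sum_g cot_exp[OF u01] w_def ..
      also have "\<dots> = \<i> * (H (of_real u) * (1 + w))"
        using w1 by (simp add: gu field_simps)
      also have "\<dots> = \<i> * (H (of_real u) * (1 - w) + 2 * (\<Sum>n=1..N. H (of_real u) * (1 - w) * w ^ n)
                      + 2 * (H (of_real u) * w ^ Suc N))"
        by (subst poly_id) simp
      also have "\<dots> = \<i> * g b k (of_real u) + 2 * \<i> * (\<Sum>n=1..N. g b k (of_real u) * e n u)
                 + 2 * \<i> * (H (of_real u) * e (Suc N) u)"
      proof -
        have we: "\<And>n. w ^ n = e n u" unfolding w_def e_def by (rule wpow)
        show ?thesis unfolding gu we by (simp add: algebra_simps)
      qed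
      finally show ?thesis .
    qed
    show ?thesis
      using all by (subst has_integral_spike_finite_eq[of "{0,1}"]) (use pt in auto)
  qed
  then have Qeq: "integral {0..1} fi = Qv N" for N by (rule integral_unique)
  define f where "f = (\<lambda>j::nat. 1 / (of_nat j + b) ^ k)"
  have b0: "b \<noteq> 0" using b by auto
  have summ: "summable f"
  proof -
    have "summable (\<lambda>j. inverse ((b + of_nat j) ^ k))"
      using Polygamma_converges'[OF b0, of k] k by simp
    then show ?thesis by (simp add: f_def add.commute divide_inverse)
  qed
  have hz: "hurwitz_zeta k b = suminf f" by (simp add: hurwitz_zeta_def f_def)
  have L1: "(\<lambda>N. \<Sum>n<Suc N. f n) \<longlonglongrightarrow> hurwitz_zeta k b"
    using LIMSEQ_Suc[OF summable_LIMSEQ[OF summ]] hz by simp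
  have Gsum: "(\<Sum>n=1..N. Gv n) = (1 / (2 * pi * \<i>) ^ k) * ((\<Sum>n<Suc N. f n) - 1 / b ^ k)" for N
  proof -
    have "(\<Sum>n<Suc N. f n) = f 0 + (\<Sum>n=1..N. f n)"
      by (induction N) (simp_all add: sum.cl_ivl_Suc)
    moreover have "(\<Sum>n=1..N. Gv n) = (\<Sum>n=1..N. (1 / (2 * pi * \<i>) ^ k) * f n)"
      by (intro sum.cong refl) (simp add: Gv_def f_def power_mult_distrib add.commute)
    moreover have f0: "f 0 = 1 / b ^ k" by (simp add: f_def)
    ultimately show ?thesis by (simp add: sum_divide_distrib)
  qed
  have Rlim: "R \<longlonglongrightarrow> 0" unfolding R_def e_def by (rule RL[OF hol S inS])
  have "Qv \<longlonglongrightarrow> \<i> * Gv 0 + 2 * \<i> * ((1 / (2 * pi * \<i>) ^ k) * (hurwitz_zeta k b - 1 / b ^ k)) + 2 * \<i> * 0"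
    unfolding Qv_def Gsum
    by (intro tendsto_intros L1 LIMSEQ_Suc[OF Rlim])
  moreover have "Qv \<longlonglongrightarrow> integral {0..1} fi"
  proof -
    have "Qv = (\<lambda>N. integral {0..1} fi)" using Qeq by (simp add: fun_eq_iff)
    then show ?thesis by simp
  qed
  ultimately have I: "integral {0..1} fi = \<i> * Gv 0 + 2 * \<i> * ((1 / (2 * pi * \<i>) ^ k) * (hurwitz_zeta k b - 1 / b ^ k))"
    using LIMSEQ_unique by fastforce
  have G0: "Gv 0 = 1 / (2 * pi * \<i> * b) ^ k - exp (- 2 * pi * \<i> * b) * P b k 1"
    by (simp add: Gv_def)
  have I2: "integral {0..1} fi = \<i> * (1 / (2 * pi * \<i> * b) ^ k - exp (- 2 * pi * \<i> * b) * P b k 1)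
      + 2 * \<i> * (1 / (2 * pi * \<i>) ^ k) * (hurwitz_zeta k b - 1 / b ^ k)"
    unfolding I G0 by (simp only: mult.assoc)
  have "fi integrable_on {0..1}" using intQ by blast
  from integrable_integral[OF this] show ?thesis unfolding I2 .
qed


lemma alg_final:
  fixes X Y Z D F zz p1 :: complex
  assumes "X \<noteq> 0" "Y \<noteq> 0" "F \<noteq> 0" "D = F * (zz * p1)"
  shows "Z = 1 / (2 * Y) + X * D / (4 * F) + X * zz / 4 * p1
     - \<i> * X / 2 * (\<i> * (1 / (X * Y) - zz * p1) + 2 * \<i> * (1 / X) * (Z - 1 / Y))"
  using assms by (simp add: field_simps)

theorem mainTheorem3:
  fixes k :: nat and b :: complex
  assumes "k \<ge> 2" and "b \<notin> \<int>"
  shows "(\<lambda>u. (\<Sum>j=1..k. d_coef j b *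
              (of_real u ^ (k - j) * exp (- 2 * pi * \<i> * b * of_real u) - exp (- 2 * pi * \<i> * b))
              / (fact (j - 1) * fact (k - j))) * of_real (cot (pi * u))) integrable_on {0..1}
    \<and> hurwitz_zeta k b =
        1 / (2 * b ^ k)
      + (2 * pi * \<i>) ^ k * d_coef k b / (4 * fact (k - 1))
      + (2 * pi * \<i>) ^ k * exp (- 2 * pi * \<i> * b) / 4 *
          (\<Sum>j=1..k. d_coef j b / (fact (j - 1) * fact (k - j)))
      - \<i> * (2 * pi * \<i>) ^ k / 2 *
          integral {0..1} (\<lambda>u. (\<Sum>j=1..k. d_coef j b *
              (of_real u ^ (k - j) * exp (- 2 * pi * \<i> * b * of_real u) - exp (- 2 * pi * \<i> * b))
              / (fact (j - 1) * fact (k - j))) * of_real (cot (pi * u)))"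
proof -
  note I = main_int[OF assms]
  have b0: "b \<noteq> 0" using assms(2) by auto
  have dk: "d_coef k b = fact (k - 1) * (exp (- 2 * pi * \<i> * b) * P b k 1)"
    using P_vanish[OF assms] P_zero[of k b] assms(1) by (simp add: field_simps)
  have pw: "(2 * pi * \<i> * b) ^ k = (2 * pi * \<i>) ^ k * b ^ k"
    by (simp add: power_mult_distrib)
  show ?thesis
  proof
    show "(\<lambda>u. (\<Sum>j=1..k. d_coef j b *
              (of_real u ^ (k - j) * exp (- 2 * pi * \<i> * b * of_real u) - exp (- 2 * pi * \<i> * b))
              / (fact (j - 1) * fact (k - j))) * of_real (cot (pi * u))) integrable_on {0..1}"
      using I by blast
  next
    show "hurwitz_zeta k b =
        1 / (2 * b ^ k)
      + (2 * pi * \<i>) ^ k * d_coef k b / (4 * fact (k - 1))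
      + (2 * pi * \<i>) ^ k * exp (- 2 * pi * \<i> * b) / 4 *
          (\<Sum>j=1..k. d_coef j b / (fact (j - 1) * fact (k - j)))
      - \<i> * (2 * pi * \<i>) ^ k / 2 *
          integral {0..1} (\<lambda>u. (\<Sum>j=1..k. d_coef j b *
              (of_real u ^ (k - j) * exp (- 2 * pi * \<i> * b * of_real u) - exp (- 2 * pi * \<i> * b))
              / (fact (j - 1) * fact (k - j))) * of_real (cot (pi * u)))"
      unfolding integral_unique[OF I] P_one[symmetric] pw
      by (rule alg_final) (use b0 dk in auto)
  qed
qed

end
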